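(* Let $P,Q\in\mathcal{PP}(n)$ with $\iota(P)\leq Q$. Then $\langle P,Q\rangle_q=q^{n(n-1)-\ell(P)-\ell(Q)}$, where $\ell(R)=\sharp\{(x,y)\in R^2\mid x<_r y\}$.
   Context: A plane poset is a finite set with two partial orders $\leq_h,\leq_r$ such that two distinct elements are $\leq_h$-comparable iff they are not $\leq_r$-comparable; $\mathcal{PP}(n)$ is the set of isomorphism classes of plane posets with $n$ elements. On a plane poset, $x\leq y$ iff ($x\leq_h y$ or $x\leq_r y$) is a total order (known fact). For $P,Q\in\mathcal{PP}(n)$, $\theta_{P,Q}$ is the increasing bijection $P\to Q$ and $P\leq Q$ means: for all $x,y\in P$, $\theta_{P,Q}(x)\leq_h\theta_{P,Q}(y)$ in $Q$ implies $x\leq_h y$ in $P$. $\iota(P)=(P,\leq_r,\leq_h)$. For $q$ in a field $K$, $\langle P,Q\rangle_q=q^{\phi(P,Q)}$ if $\iota(P)\leq Q$ and $0$ otherwise, where $\phi(P,Q)=\sharp\{(x,y)\in P^2\mid x<_r y,\ \theta_{P,Q}(x)<_h\theta_{P,Q}(y)\}+\sharp\{(x,y)\in P^2\mid x<_h y,\ \theta_{P,Q}(x)<_r\theta_{P,Q}(y)\}$, with $q^0=1$. *)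

theory Defs
  imports Main
begin

definition plane_poset :: "'a set \<Rightarrow> 'a rel \<Rightarrow> 'a rel \<Rightarrow> bool" where
  "plane_poset A h r \<longleftrightarrow> finite A \<and>
     h \<subseteq> A \<times> A \<and> r \<subseteq> A \<times> A \<and>
     partial_order_on A h \<and> partial_order_on A r \<and>
     (\<forall>x\<in>A. \<forall>y\<in>A. x \<noteq> y \<longrightarrow>
        (((x,y) \<in> h \<or> (y,x) \<in> h) \<longleftrightarrow> \<not> ((x,y) \<in> r \<or> (y,x) \<in> r)))"

definition tot :: "'a rel \<Rightarrow> 'a rel \<Rightarrow> 'a rel" where
  "tot h r = h \<union> r"

definition theta :: "'a set \<Rightarrow> 'a rel \<Rightarrow> 'a rel \<Rightarrow> 'b set \<Rightarrow> 'b rel \<Rightarrow> 'b rel \<Rightarrow> 'a \<Rightarrow> 'b" where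
  "theta A h r B h' r' = (THE f. bij_betw f A B \<and>
      (\<forall>x\<in>A. \<forall>y\<in>A. (x,y) \<in> tot h r \<longrightarrow> (f x, f y) \<in> tot h' r') \<and>
      (\<forall>x. x \<notin> A \<longrightarrow> f x = undefined))"

definition pp_le :: "'a set \<Rightarrow> 'a rel \<Rightarrow> 'a rel \<Rightarrow> 'b set \<Rightarrow> 'b rel \<Rightarrow> 'b rel \<Rightarrow> bool" where
  "pp_le A h r B h' r' \<longleftrightarrow>
     (\<forall>x\<in>A. \<forall>y\<in>A. (theta A h r B h' r' x, theta A h r B h' r' y) \<in> h' \<longrightarrow> (x,y) \<in> h)"

text \<open>iota(P) = (P, <=_r, <=_h); so iota(P) <= Q is pp_le A r h B h' r'.\<close>

definition strict :: "'a rel \<Rightarrow> 'a rel" where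
  "strict R = {(x,y). (x,y) \<in> R \<and> x \<noteq> y}"

definition phi :: "'a set \<Rightarrow> 'a rel \<Rightarrow> 'a rel \<Rightarrow> 'b set \<Rightarrow> 'b rel \<Rightarrow> 'b rel \<Rightarrow> nat" where
  "phi A h r B h' r' =
     (let \<theta> = theta A h r B h' r' in
      card {(x,y). x \<in> A \<and> y \<in> A \<and> (x,y) \<in> strict r \<and> (\<theta> x, \<theta> y) \<in> strict h'}
    + card {(x,y). x \<in> A \<and> y \<in> A \<and> (x,y) \<in> strict h \<and> (\<theta> x, \<theta> y) \<in> strict r'})"

definition pairing :: "'k::field \<Rightarrow> 'a set \<Rightarrow> 'a rel \<Rightarrow> 'a rel \<Rightarrow> 'b set \<Rightarrow> 'b rel \<Rightarrow> 'b rel \<Rightarrow> 'k" where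
  "pairing q A h r B h' r' =
     (if pp_le A r h B h' r' then q ^ phi A h r B h' r' else 0)"

definition ell :: "'a set \<Rightarrow> 'a rel \<Rightarrow> nat" where
  "ell A r = card {(x,y). x \<in> A \<and> y \<in> A \<and> (x,y) \<in> strict r}"

end

theory Submission imports Defs begin

definition lin :: "'a set \<Rightarrow> 'a rel \<Rightarrow> bool" where
 "lin S L \<longleftrightarrow> L \<subseteq> S \<times> S \<and> (\<forall>x\<in>S. (x,x)\<in>L) \<and> (\<forall>x y. (x,y)\<in>L \<longrightarrow> (y,x)\<in>L \<longrightarrow> x=y) \<and>
   (\<forall>x y z. (x,y)\<in>L \<longrightarrow> (y,z)\<in>L \<longrightarrow> (x,z)\<in>L) \<and> (\<forall>x\<in>S.\<forall>y\<in>S. (x,y)\<in>L \<or> (y,x)\<in>L)"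

lemma pp_facts:
  assumes "plane_poset A h r"
  shows "finite A" "h \<subseteq> A \<times> A" "r \<subseteq> A \<times> A"
    "\<And>x. x\<in>A \<Longrightarrow> (x,x)\<in>h" "\<And>x. x\<in>A \<Longrightarrow> (x,x)\<in>r"
    "\<And>x y. (x,y)\<in>h \<Longrightarrow> (y,x)\<in>h \<Longrightarrow> x=y" "\<And>x y. (x,y)\<in>r \<Longrightarrow> (y,x)\<in>r \<Longrightarrow> x=y"
    "\<And>x y z. (x,y)\<in>h \<Longrightarrow> (y,z)\<in>h \<Longrightarrow> (x,z)\<in>h" "\<And>x y z. (x,y)\<in>r \<Longrightarrow> (y,z)\<in>r \<Longrightarrow> (x,z)\<in>r"
    "\<And>x y. x\<in>A \<Longrightarrow> y\<in>A \<Longrightarrow> x\<noteq>y \<Longrightarrow> ((x,y)\<in>h \<or> (y,x)\<in>h) \<longleftrightarrow> \<not>((x,y)\<in>r \<or> (y,x)\<in>r)"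
  using assms unfolding plane_poset_def partial_order_on_def preorder_on_def refl_on_def antisym_def trans_def
  apply -
  apply (simp; fail)
  apply (simp; fail)
  apply (simp; fail)
  apply (simp; fail)
  apply (simp; fail)
  apply (metis)
  apply (metis)
  apply (metis)
  apply (metis)
  by metis

lemma tot_lin:
  assumes P: "plane_poset A h r"
  shows "lin A (tot h r)"
proof -
  note f = pp_facts[OF P]
  have tr: "(x,z) \<in> h \<union> r" if "(x,y) \<in> h \<union> r" "(y,z) \<in> h \<union> r" for x y z
  proof -
    have xyz: "x\<in>A" "y\<in>A" "z\<in>A" using that f(2,3) by auto
    show ?thesis
    proof (cases "x = y \<or> y = z \<or> x = z")
      case True then show ?thesis using that f(4,5) xyz by auto
    next
      case False
      then have ne: "x\<noteq>y" "y\<noteq>z" "x\<noteq>z" by auto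
      have c1: "((x,y)\<in>h \<or> (y,x)\<in>h) \<longleftrightarrow> \<not>((x,y)\<in>r \<or> (y,x)\<in>r)" using f(10)[OF xyz(1) xyz(2) ne(1)] .
      have c2: "((y,z)\<in>h \<or> (z,y)\<in>h) \<longleftrightarrow> \<not>((y,z)\<in>r \<or> (z,y)\<in>r)" using f(10)[OF xyz(2) xyz(3) ne(2)] .
      have c3: "((x,z)\<in>h \<or> (z,x)\<in>h) \<longleftrightarrow> \<not>((x,z)\<in>r \<or> (z,x)\<in>r)" using f(10)[OF xyz(1) xyz(3) ne(3)] .
      have "(x,y)\<in>h \<or> (x,y)\<in>r" "(y,z)\<in>h \<or> (y,z)\<in>r" using that by auto
      then show ?thesis
      proof (elim disjE)
        assume "(x,y)\<in>h" "(y,z)\<in>h" then show ?thesis using f(8) by blast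
      next
        assume "(x,y)\<in>r" "(y,z)\<in>r" then show ?thesis using f(9) by blast
      next
        assume a: "(x,y)\<in>h" "(y,z)\<in>r"
        have "(z,x)\<notin>h" using a f(8)[of z x y] c2 by blast
        moreover have "(z,x)\<notin>r" using a f(9)[of y z x] c1 by blast
        ultimately show ?thesis using c3 by blast
      next
        assume a: "(x,y)\<in>r" "(y,z)\<in>h"
        have "(z,x)\<notin>h" using a f(8)[of y z x] c1 by blast
        moreover have "(z,x)\<notin>r" using a f(9)[of z x y] c2 by blast
        ultimately show ?thesis using c3 by blast
      qed
    qed
  qed
  have tl: "\<forall>x\<in>A.\<forall>y\<in>A. (x,y)\<in>h\<union>r \<or> (y,x)\<in>h\<union>r"
    using f(4,10) by blast
  have an: "\<forall>x y. (x,y)\<in>h\<union>r \<longrightarrow> (y,x)\<in>h\<union>r \<longrightarrow> x=y"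
  proof (intro allI impI)
    fix x y assume a: "(x,y)\<in>h\<union>r" "(y,x)\<in>h\<union>r"
    then have "x\<in>A" "y\<in>A" using f(2,3) by auto
    then show "x = y" using a f(6,7) f(10)[of x y] by blast
  qed
  show ?thesis unfolding lin_def tot_def
    using f(2,3,4) tr tl an by blast
qed

lemma linD:
  assumes "lin S L"
  shows "L \<subseteq> S \<times> S" "\<And>x. x\<in>S \<Longrightarrow> (x,x)\<in>L" "\<And>x y. (x,y)\<in>L \<Longrightarrow> (y,x)\<in>L \<Longrightarrow> x=y"
    "\<And>x y z. (x,y)\<in>L \<Longrightarrow> (y,z)\<in>L \<Longrightarrow> (x,z)\<in>L" "\<And>x y. x\<in>S \<Longrightarrow> y\<in>S \<Longrightarrow> (x,y)\<in>L \<or> (y,x)\<in>L"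
  using assms unfolding lin_def by blast+

definition rk :: "'a set \<Rightarrow> 'a rel \<Rightarrow> 'a \<Rightarrow> nat" where
  "rk S L x = card {y\<in>S. (y,x)\<in>L \<and> y \<noteq> x}"

lemma rk_less:
  assumes "lin S L" "finite S" "x\<in>S" "y\<in>S" "(x,y)\<in>L" "x\<noteq>y"
  shows "rk S L x < rk S L y"
proof -
  have "{z\<in>S. (z,x)\<in>L \<and> z \<noteq> x} \<subset> {z\<in>S. (z,y)\<in>L \<and> z \<noteq> y}"
  proof
    show "{z\<in>S. (z,x)\<in>L \<and> z \<noteq> x} \<subseteq> {z\<in>S. (z,y)\<in>L \<and> z \<noteq> y}"
      using assms linD(3,4)[OF assms(1)] by blast
    have "x \<in> {z\<in>S. (z,y)\<in>L \<and> z \<noteq> y}" using assms by auto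
    then show "{z\<in>S. (z,x)\<in>L \<and> z \<noteq> x} \<noteq> {z\<in>S. (z,y)\<in>L \<and> z \<noteq> y}" by auto
  qed
  then show ?thesis unfolding rk_def by (rule psubset_card_mono[rotated]) (use assms in auto)
qed

lemma rk_bij:
  assumes "lin S L" "finite S"
  shows "bij_betw (rk S L) S {..<card S}"
proof -
  have inj: "inj_on (rk S L) S"
  proof (rule inj_onI)
    fix x y assume "x\<in>S" "y\<in>S" "rk S L x = rk S L y"
    then show "x = y" using rk_less[OF assms, of x y] rk_less[OF assms, of y x] linD(5)[OF assms(1), of x y]
      by fastforce
  qed
  have sub: "rk S L ` S \<subseteq> {..<card S}"
  proof
    fix k assume "k \<in> rk S L ` S"
    then obtain x where x: "x\<in>S" "k = rk S L x" by auto
    have "{y\<in>S. (y,x)\<in>L \<and> y \<noteq> x} \<subset> S" using x by auto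
    then show "k \<in> {..<card S}" using x assms(2) unfolding rk_def
      by (simp add: psubset_card_mono)
  qed
  have "card (rk S L ` S) = card {..<card S}" using card_image[OF inj] by simp
  then have "rk S L ` S = {..<card S}" using sub by (simp add: card_subset_eq)
  then show ?thesis using inj unfolding bij_betw_def by simp
qed

lemma rk_mono_bij:
  assumes LA: "lin A LA" and LB: "lin B LB" and fA: "finite A"
    and bij: "bij_betw f A B" and mono: "\<forall>x\<in>A. \<forall>y\<in>A. (x,y)\<in>LA \<longrightarrow> (f x, f y)\<in>LB"
    and x: "x\<in>A"
  shows "rk B LB (f x) = rk A LA x"
proof -
  have inj: "inj_on f A" using bij bij_betw_def by blast
  have "bij_betw f {y\<in>A. (y,x)\<in>LA \<and> y \<noteq> x} {z\<in>B. (z,f x)\<in>LB \<and> z \<noteq> f x}"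
  proof (rule bij_betw_byWitness[where f'="inv_into A f"])
    show "\<forall>a\<in>{y \<in> A. (y, x) \<in> LA \<and> y \<noteq> x}. inv_into A f (f a) = a"
      using inj by auto
    show "\<forall>a'\<in>{z \<in> B. (z, f x) \<in> LB \<and> z \<noteq> f x}. f (inv_into A f a') = a'"
      using bij by (simp add: bij_betw_inv_into_right)
    show "f ` {y \<in> A. (y, x) \<in> LA \<and> y \<noteq> x} \<subseteq> {z \<in> B. (z, f x) \<in> LB \<and> z \<noteq> f x}"
    proof
      fix z assume "z \<in> f ` {y \<in> A. (y, x) \<in> LA \<and> y \<noteq> x}"
      then obtain y where y: "y\<in>A" "(y,x)\<in>LA" "y\<noteq>x" "z = f y" by auto
      have "f y \<noteq> f x" using inj y x inj_on_eq_iff by metis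
      then show "z \<in> {z \<in> B. (z, f x) \<in> LB \<and> z \<noteq> f x}"
        using y mono x bij bij_betwE by fastforce
    qed
    show "inv_into A f ` {z \<in> B. (z, f x) \<in> LB \<and> z \<noteq> f x} \<subseteq> {y \<in> A. (y, x) \<in> LA \<and> y \<noteq> x}"
    proof
      fix y assume "y \<in> inv_into A f ` {z \<in> B. (z, f x) \<in> LB \<and> z \<noteq> f x}"
      then obtain z where z: "z\<in>B" "(z, f x)\<in>LB" "z \<noteq> f x" "y = inv_into A f z" by auto
      have yA: "y \<in> A" using z bij by (metis bij_betw_def inv_into_into)
      have fy: "f y = z" using z bij by (simp add: bij_betw_inv_into_right)
      have yx: "y \<noteq> x" using fy z by auto
      have "(y,x)\<in>LA"
      proof (rule ccontr)
        assume "(y,x)\<notin>LA"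
        then have "(x,y)\<in>LA" using linD(5)[OF LA yA x] by blast
        then have "(f x, z)\<in>LB" using mono x yA fy by blast
        then show False using z linD(3)[OF LB] by blast
      qed
      then show "y \<in> {y \<in> A. (y, x) \<in> LA \<and> y \<noteq> x}" using yA yx by auto
    qed
  qed
  then show ?thesis unfolding rk_def by (simp add: bij_betw_same_card)
qed

definition ff :: "'a set \<Rightarrow> 'a rel \<Rightarrow> 'b set \<Rightarrow> 'b rel \<Rightarrow> 'a \<Rightarrow> 'b" where
  "ff A LA B LB x = (if x \<in> A then inv_into B (rk B LB) (rk A LA x) else undefined)"

lemma theta_props:
  assumes PA: "plane_poset A h r" and PB: "plane_poset B h' r'" and c: "card A = card B"
  shows "bij_betw (theta A h r B h' r') A B \<and>
      (\<forall>x\<in>A. \<forall>y\<in>A. (x,y) \<in> tot h r \<longrightarrow> (theta A h r B h' r' x, theta A h r B h' r' y) \<in> tot h' r')"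
proof -
  define LA where "LA = tot h r"
  define LB where "LB = tot h' r'"
  have LA: "lin A LA" using tot_lin[OF PA] LA_def by simp
  have LB: "lin B LB" using tot_lin[OF PB] LB_def by simp
  have fA: "finite A" and fB: "finite B" using pp_facts(1)[OF PA] pp_facts(1)[OF PB] .
  have bA: "bij_betw (rk A LA) A {..<card A}" by (rule rk_bij[OF LA fA])
  have bB: "bij_betw (rk B LB) B {..<card A}" using rk_bij[OF LB fB] c by simp
  have bBi: "bij_betw (inv_into B (rk B LB)) {..<card A} B" using bij_betw_inv_into[OF bB] .
  let ?g = "ff A LA B LB"
  have gb: "bij_betw ?g A B"
  proof -
    have "bij_betw (inv_into B (rk B LB) \<circ> rk A LA) A B" using bij_betw_trans[OF bA bBi] .
    then show ?thesis by (rule bij_betw_cong[THEN iffD1, rotated]) (simp add: ff_def)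
  qed
  have rkg: "rk B LB (?g x) = rk A LA x" if "x\<in>A" for x
  proof -
    have "rk A LA x \<in> {..<card A}" using that bA bij_betwE by blast
    then show ?thesis using that bB unfolding ff_def by (simp add: bij_betw_inv_into_right)
  qed
  have gm: "\<forall>x\<in>A. \<forall>y\<in>A. (x,y)\<in>LA \<longrightarrow> (?g x, ?g y)\<in>LB"
  proof (intro ballI impI)
    fix x y assume xy: "x\<in>A" "y\<in>A" "(x,y)\<in>LA"
    have gx: "?g x \<in> B" "?g y \<in> B" using gb xy bij_betwE by blast+
    show "(?g x, ?g y)\<in>LB"
    proof (cases "x = y")
      case True then show ?thesis using linD(2)[OF LB] gx by auto
    next
      case False
      then have lt: "rk A LA x < rk A LA y" using rk_less[OF LA fA xy] by simp
      show ?thesis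
      proof (rule ccontr)
        assume "(?g x, ?g y)\<notin>LB"
        moreover have "?g y \<noteq> ?g x" using gb False xy unfolding bij_betw_def inj_on_def by metis
        ultimately have "(?g y, ?g x)\<in>LB" "?g y \<noteq> ?g x" using linD(5)[OF LB gx] by blast+
        then have "rk B LB (?g y) < rk B LB (?g x)" using rk_less[OF LB fB gx(2) gx(1)] by simp
        then show False using lt rkg xy by simp
      qed
    qed
  qed
  have P: "\<exists>!f. bij_betw f A B \<and> (\<forall>x\<in>A. \<forall>y\<in>A. (x,y) \<in> LA \<longrightarrow> (f x, f y) \<in> LB) \<and>
      (\<forall>x. x \<notin> A \<longrightarrow> f x = undefined)"
  proof (rule ex1I[where a="?g"])
    show "bij_betw ?g A B \<and> (\<forall>x\<in>A. \<forall>y\<in>A. (x,y) \<in> LA \<longrightarrow> (?g x, ?g y) \<in> LB) \<and>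
      (\<forall>x. x \<notin> A \<longrightarrow> ?g x = undefined)" using gb gm by (simp add: ff_def)
  next
    fix f assume f: "bij_betw f A B \<and> (\<forall>x\<in>A. \<forall>y\<in>A. (x,y) \<in> LA \<longrightarrow> (f x, f y) \<in> LB) \<and>
      (\<forall>x. x \<notin> A \<longrightarrow> f x = undefined)"
    show "f = ?g"
    proof
      fix x show "f x = ?g x"
      proof (cases "x \<in> A")
        case True
        have "rk B LB (f x) = rk A LA x" using rk_mono_bij[OF LA LB fA _ _ True] f by blast
        moreover have "f x \<in> B" using f True bij_betwE by blast
        ultimately show ?thesis using True bB unfolding ff_def
          by (metis bij_betw_def inv_into_f_f)
      next
        case False then show ?thesis using f by (simp add: ff_def)
      qed
    qed
  qed
  have "bij_betw (theta A h r B h' r') A B \<and>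
      (\<forall>x\<in>A. \<forall>y\<in>A. (x,y) \<in> LA \<longrightarrow> (theta A h r B h' r' x, theta A h r B h' r' y) \<in> LB) \<and>
      (\<forall>x. x \<notin> A \<longrightarrow> theta A h r B h' r' x = undefined)"
    unfolding theta_def LA_def[symmetric] LB_def[symmetric] by (rule theI'[OF P])
  then show ?thesis unfolding LA_def LB_def by blast
qed

lemma count_pp:
  assumes P: "plane_poset A h r"
  shows "2 * (card {(x,y). x \<in> A \<and> y \<in> A \<and> (x,y) \<in> strict h} + ell A r) = card A * (card A - 1)"
proof -
  note f = pp_facts[OF P]
  define H where "H = {(x,y). x \<in> A \<and> y \<in> A \<and> (x,y) \<in> strict h}"
  define R where "R = {(x,y). x \<in> A \<and> y \<in> A \<and> (x,y) \<in> strict r}"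
  define sw where "sw = (\<lambda>(a::'a,b::'a). (b,a))"
  have injsw: "inj_on sw X" for X unfolding sw_def inj_on_def by auto
  have fin: "finite (A \<times> A)" using f(1) by simp
  have fH: "finite H" and fR: "finite R"
    by (rule finite_subset[OF _ fin], auto simp: H_def R_def)+
  have fH': "finite (sw ` H)" and fR': "finite (sw ` R)" using fH fR by auto
  define D where "D = A \<times> A - (\<lambda>x. (x,x)) ` A"
  have cD: "card D = card A * card A - card A"
  proof -
    have "card ((\<lambda>x. (x,x)) ` A) = card A" by (rule card_image) (auto simp: inj_on_def)
    moreover have "(\<lambda>x. (x,x)) ` A \<subseteq> A \<times> A" by auto
    ultimately show ?thesis unfolding D_def using fin
      by (simp add: card_Diff_subset card_cartesian_product finite_subset)
  qed
  have eqD: "D = ((H \<union> sw ` H) \<union> (R \<union> sw ` R))"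
  proof
    show "D \<subseteq> (H \<union> sw ` H) \<union> (R \<union> sw ` R)"
    proof
      fix p assume "p \<in> D"
      then obtain x y where p: "p = (x,y)" "x\<in>A" "y\<in>A" "x\<noteq>y" unfolding D_def by auto
      have "(x,y)\<in>h \<or> (y,x)\<in>h \<or> (x,y)\<in>r \<or> (y,x)\<in>r" using f(10)[OF p(2,3,4)] by blast
      then show "p \<in> (H \<union> sw ` H) \<union> (R \<union> sw ` R)"
        using p unfolding H_def R_def sw_def strict_def by (auto simp: image_iff)
    qed
    show "(H \<union> sw ` H) \<union> (R \<union> sw ` R) \<subseteq> D"
      unfolding D_def H_def R_def sw_def strict_def by auto
  qed
  have d1: "H \<inter> sw ` H = {}" using f(6) unfolding H_def sw_def strict_def by auto
  have d2: "R \<inter> sw ` R = {}" using f(7) unfolding R_def sw_def strict_def by auto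
  have d3: "(H \<union> sw ` H) \<inter> (R \<union> sw ` R) = {}"
  proof -
    have "False" if "(x,y) \<in> H \<union> sw ` H" "(x,y) \<in> R \<union> sw ` R" for x y
    proof -
      have a: "x\<in>A" "y\<in>A" "x\<noteq>y" "(x,y)\<in>h \<or> (y,x)\<in>h" using that(1) unfolding H_def sw_def strict_def by auto
      have "(x,y)\<in>r \<or> (y,x)\<in>r" using that(2) unfolding R_def sw_def strict_def by auto
      then show False using f(10)[OF a(1,2,3)] a(4) by blast
    qed
    then show ?thesis by auto
  qed
  have "card D = (card H + card H) + (card R + card R)"
    unfolding eqD
    by (simp add: card_Un_disjoint d1 d2 d3 fH fR fH' fR' card_image[OF injsw])
  then show ?thesis using cD unfolding ell_def H_def[symmetric] R_def[symmetric]
    by (simp add: algebra_simps diff_mult_distrib2)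
qed

theorem proposition28:
  fixes q :: "'k::field" and A :: "'a set" and B :: "'b set"
    and h r :: "'a rel" and h' r' :: "'b rel" and n :: nat
  assumes "plane_poset A h r" and "plane_poset B h' r'"
    and "card A = n" and "card B = n"
    and "pp_le A r h B h' r'"
  shows "pairing q A h r B h' r' = q ^ (n * (n - 1) - ell A r - ell B r')"
proof -
  note fA = pp_facts[OF assms(1)] and fB = pp_facts[OF assms(2)]
  define \<theta> where "\<theta> = theta A h r B h' r'"
  have tp: "bij_betw \<theta> A B" "\<forall>x\<in>A. \<forall>y\<in>A. (x,y) \<in> tot h r \<longrightarrow> (\<theta> x, \<theta> y) \<in> tot h' r'"
    using theta_props[OF assms(1,2)] assms(3,4) unfolding \<theta>_def by auto
  have inj: "inj_on \<theta> A" using tp(1) bij_betw_def by blast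
  have le: "\<And>x y. x\<in>A \<Longrightarrow> y\<in>A \<Longrightarrow> (\<theta> x, \<theta> y) \<in> h' \<Longrightarrow> (x,y) \<in> r"
  proof -
    have "theta A r h B h' r' = theta A h r B h' r'" unfolding theta_def tot_def by (simp add: Un_commute)
    then show "\<And>x y. x\<in>A \<Longrightarrow> y\<in>A \<Longrightarrow> (\<theta> x, \<theta> y) \<in> h' \<Longrightarrow> (x,y) \<in> r"
      using assms(5) unfolding pp_le_def \<theta>_def by simp
  qed
  define HA where "HA = {(x,y). x \<in> A \<and> y \<in> A \<and> (x,y) \<in> strict h}"
  define HB where "HB = {(x,y). x \<in> B \<and> y \<in> B \<and> (x,y) \<in> strict h'}"
  define C1 where "C1 = {(x,y). x \<in> A \<and> y \<in> A \<and> (x,y) \<in> strict r \<and> (\<theta> x, \<theta> y) \<in> strict h'}"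
  define C2 where "C2 = {(x,y). x \<in> A \<and> y \<in> A \<and> (x,y) \<in> strict h \<and> (\<theta> x, \<theta> y) \<in> strict r'}"
  have ph: "phi A h r B h' r' = card C1 + card C2"
    unfolding phi_def C1_def C2_def \<theta>_def Let_def by simp
  define m where "m = (\<lambda>(x,y). (\<theta> x, \<theta> y))"
  have injm: "inj_on m C1"
    unfolding m_def C1_def inj_on_def using inj by (auto simp: inj_on_eq_iff)
  have imgm: "m ` C1 = HB"
  proof
    show "m ` C1 \<subseteq> HB" unfolding m_def C1_def HB_def using tp(1) by (auto simp: bij_betwE)
    show "HB \<subseteq> m ` C1"
    proof
      fix p assume "p \<in> HB"
      then obtain u v where p: "p = (u,v)" "u\<in>B" "v\<in>B" "(u,v)\<in>strict h'" unfolding HB_def by auto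
      define x where "x = inv_into A \<theta> u"
      define y where "y = inv_into A \<theta> v"
      have xy: "x\<in>A" "y\<in>A" "\<theta> x = u" "\<theta> y = v"
        using p tp(1) unfolding x_def y_def
        by (auto simp: bij_betw_inv_into_right inv_into_into bij_betw_def)
      have "(x,y) \<in> r" using le[OF xy(1,2)] p(4) xy unfolding strict_def by auto
      moreover have "x \<noteq> y" using p(4) xy unfolding strict_def by auto
      ultimately have "(x,y) \<in> C1" using xy p unfolding C1_def strict_def by auto
      then show "p \<in> m ` C1" using xy p unfolding m_def by force
    qed
  qed
  have c1: "card C1 = card HB" using card_image[OF injm] imgm by simp
  have c2: "C2 = HA"
  proof
    show "C2 \<subseteq> HA" unfolding C2_def HA_def by auto
    show "HA \<subseteq> C2"
    proof
      fix p assume "p \<in> HA"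
      then obtain x y where p: "p = (x,y)" "x\<in>A" "y\<in>A" "(x,y)\<in>h" "x\<noteq>y" unfolding HA_def strict_def by auto
      have nr: "(x,y)\<notin>r" "(y,x)\<notin>r" using fA(10)[OF p(2,3,5)] p(4) by auto
      have ne: "\<theta> x \<noteq> \<theta> y" using inj p inj_on_eq_iff by metis
      have "(\<theta> x, \<theta> y) \<in> h' \<union> r'" using tp(2) p unfolding tot_def by auto
      moreover have "(\<theta> x, \<theta> y) \<notin> h'" using le[OF p(2,3)] nr by blast
      ultimately have "(\<theta> x, \<theta> y) \<in> r'" by blast
      then show "p \<in> C2" using p ne unfolding C2_def strict_def by auto
    qed
  qed
  have kA: "2 * (card HA + ell A r) = n * (n - 1)" using count_pp[OF assms(1)] assms(3) unfolding HA_def by simp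
  have kB: "2 * (card HB + ell B r') = n * (n - 1)" using count_pp[OF assms(2)] assms(4) unfolding HB_def by simp
  have "phi A h r B h' r' = n * (n - 1) - ell A r - ell B r'"
    using ph c1 c2 kA kB by simp
  then show ?thesis unfolding pairing_def using assms(5) by simp
qed

end
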